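(* Let $\mathcal F=(f_t)$ be a continuous flow on a compact metric space $(X,d)$ and let $\nu$ be an $\mathcal F$-invariant Borel probability measure which is almost expansive at scale $\varepsilon$. Let $s>0$ and $\alpha>0$. Then for all sufficiently small $\rho\in(0,\varepsilon/2)$ the following holds. For each $t>0$ let $\mathscr A_t$ be a partition adapted to a $(t,\rho)$-separated set of maximal cardinality, and let $A\subset X$ be a measurable set with $\nu(A)>0$. Then for every $\kappa>0$ there is $t_0$ such that for every $t\ge t_0$ there is a set $U$ which is a union of elements of $\mathscr A_t$ with $\nu(f_{t/2}U\setminus f_{[-3s,3s]}A)<\kappa$ and $\nu(A\setminus f_{t/2}U)<\alpha$.
   Context: $\Gamma_\varepsilon(x)=\{y: d(f_tx,f_ty)<\varepsilon\ \forall t\in\mathbb{R}\}$; $\mathrm{NE}(\varepsilon)=\{x:\Gamma_\varepsilon(x)\not\subset f_{[-s,s]}(x)\text{ for every } s>0\}$, where $f_{[-s,s]}A=\bigcup_{r\in[-s,s]}f_rA$. $\nu$ is almost expansive at scale $\varepsilon$ if $\nu(\mathrm{NE}(\varepsilon))=0$. Bowen ball $B_t(x,\rho)=\{y:d(f_rx,f_ry)<\rho\ \forall r\in[0,t]\}$. Given a $(t,\rho)$-separated set $E$ of maximal cardinality, a partition $\mathscr A$ is adapted to $E$ if for every $A'\in\mathscr A$ there is $x\in E$ with $B_t(x,\rho/2)\subset A'\subset\overline{B_t}(x,\rho)$. *)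

theory Defs
  imports "HOL-Analysis.Analysis" "HOL-Probability.Probability"
begin

definition continuous_flow :: "(real \<Rightarrow> 'a::metric_space \<Rightarrow> 'a) \<Rightarrow> bool" where
  "continuous_flow f \<longleftrightarrow>
     (\<forall>x. f 0 x = x) \<and> (\<forall>s t x. f (s + t) x = f s (f t x)) \<and>
     continuous_on UNIV (\<lambda>(t, x). f t x)"

definition invariant_borel_prob :: "(real \<Rightarrow> 'a::metric_space \<Rightarrow> 'a) \<Rightarrow> 'a measure \<Rightarrow> bool" where
  "invariant_borel_prob f \<nu> \<longleftrightarrow>
     prob_space \<nu> \<and> sets \<nu> = sets borel \<and>
     (\<forall>t. \<forall>B\<in>sets borel. emeasure \<nu> (f t -` B) = emeasure \<nu> B)"

definition flow_seg :: "(real \<Rightarrow> 'a \<Rightarrow> 'a) \<Rightarrow> real \<Rightarrow> real \<Rightarrow> 'a set \<Rightarrow> 'a set" where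
  "flow_seg f a b A = (\<Union>r\<in>{a..b}. f r ` A)"

definition Gamma :: "(real \<Rightarrow> 'a::metric_space \<Rightarrow> 'a) \<Rightarrow> real \<Rightarrow> 'a \<Rightarrow> 'a set" where
  "Gamma f \<epsilon> x = {y. \<forall>t. dist (f t x) (f t y) < \<epsilon>}"

definition NE :: "(real \<Rightarrow> 'a::metric_space \<Rightarrow> 'a) \<Rightarrow> real \<Rightarrow> 'a set" where
  "NE f \<epsilon> = {x. \<forall>s>0. \<not> Gamma f \<epsilon> x \<subseteq> flow_seg f (-s) s {x}}"

definition almost_expansive :: "(real \<Rightarrow> 'a::metric_space \<Rightarrow> 'a) \<Rightarrow> 'a measure \<Rightarrow> real \<Rightarrow> bool" where
  "almost_expansive f \<nu> \<epsilon> \<longleftrightarrow> NE f \<epsilon> \<in> null_sets \<nu>"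

definition bowen_ball :: "(real \<Rightarrow> 'a::metric_space \<Rightarrow> 'a) \<Rightarrow> real \<Rightarrow> 'a \<Rightarrow> real \<Rightarrow> 'a set" where
  "bowen_ball f t x \<rho> = {y. \<forall>r\<in>{0..t}. dist (f r x) (f r y) < \<rho>}"

definition closed_bowen_ball :: "(real \<Rightarrow> 'a::metric_space \<Rightarrow> 'a) \<Rightarrow> real \<Rightarrow> 'a \<Rightarrow> real \<Rightarrow> 'a set" where
  "closed_bowen_ball f t x \<rho> = {y. \<forall>r\<in>{0..t}. dist (f r x) (f r y) \<le> \<rho>}"

definition separated :: "(real \<Rightarrow> 'a::metric_space \<Rightarrow> 'a) \<Rightarrow> real \<Rightarrow> real \<Rightarrow> 'a set \<Rightarrow> bool" where
  "separated f t \<rho> E \<longleftrightarrow> (\<forall>x\<in>E. \<forall>y\<in>E. x \<noteq> y \<longrightarrow> y \<notin> bowen_ball f t x \<rho>)"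

definition max_separated :: "(real \<Rightarrow> 'a::metric_space \<Rightarrow> 'a) \<Rightarrow> real \<Rightarrow> real \<Rightarrow> 'a set \<Rightarrow> bool" where
  "max_separated f t \<rho> E \<longleftrightarrow> separated f t \<rho> E \<and> finite E \<and>
     (\<forall>E'. separated f t \<rho> E' \<longrightarrow> finite E' \<and> card E' \<le> card E)"

definition borel_partition :: "'a::topological_space set set \<Rightarrow> bool" where
  "borel_partition P \<longleftrightarrow> \<Union>P = UNIV \<and> {} \<notin> P \<and> P \<subseteq> sets borel \<and>
     (\<forall>A\<in>P. \<forall>B\<in>P. A \<noteq> B \<longrightarrow> A \<inter> B = {})"

definition adapted_partition ::
  "(real \<Rightarrow> 'a::metric_space \<Rightarrow> 'a) \<Rightarrow> real \<Rightarrow> real \<Rightarrow> 'a set \<Rightarrow> 'a set set \<Rightarrow> bool" where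
  "adapted_partition f t \<rho> E P \<longleftrightarrow> borel_partition P \<and>
     (\<forall>A'\<in>P. \<exists>x\<in>E. bowen_ball f t x (\<rho>/2) \<subseteq> A' \<and> A' \<subseteq> closed_bowen_ball f t x \<rho>)"

text \<open>Outer measure bound: \<open>\<nu>(D) < c\<close> read via a measurable cover (robust if D is not Borel).\<close>
definition outer_less :: "'a measure \<Rightarrow> 'a set \<Rightarrow> ennreal \<Rightarrow> bool" where
  "outer_less \<nu> D c \<longleftrightarrow> (\<exists>W\<in>sets \<nu>. D \<subseteq> W \<and> emeasure \<nu> W < c)"

end

theory Submission
  imports Defs
begin


lemma closed_regular:
  fixes M :: "'a::metric_space measure"
  assumes fm: "finite_measure M" and sb: "sets M = sets borel" and B: "B \<in> sets borel"
  shows "\<forall>e>0. \<exists>F G. closed F \<and> open G \<and> F \<subseteq> B \<and> B \<subseteq> G \<and> measure M (G - F) < e"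
proof -
  interpret finite_measure M by fact
  have meas: "X \<in> sets M" if "X \<in> sets borel" for X using that sb by simp
  have "B \<in> sigma_sets UNIV (Collect closed)"
  proof -
    have "sets (borel::'a measure) = sigma_sets UNIV (Collect closed)"
      by (subst borel_eq_closed) (simp add: sets_measure_of)
    then show ?thesis using B by simp
  qed
  then show ?thesis
  proof (induction rule: sigma_sets.induct)
    case (Basic a)
    then have ca: "closed a" by simp
    show ?case
    proof (cases "a = {}")
      case True
      show ?thesis
      proof (intro allI impI)
        fix e :: real assume e: "0 < e"
        show "\<exists>F G. closed F \<and> open G \<and> F \<subseteq> a \<and> a \<subseteq> G \<and> measure M (G - F) < e"
        proof (rule exI[of _ a], rule exI[of _ a])
          show "closed a \<and> open a \<and> a \<subseteq> a \<and> a \<subseteq> a \<and> measure M (a - a) < e"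
            using e True by simp
        qed
      qed
    next
      case False
      define Gs where "Gs n = {x. infdist x a < 1 / real (Suc n)}" for n
      have oG: "open (Gs n)" for n unfolding Gs_def
        by (intro open_Collect_less continuous_intros)
      have aG: "a \<subseteq> Gs n" for n unfolding Gs_def
        using infdist_zero by (auto)
      have dec: "decseq Gs" unfolding decseq_def
      proof (intro allI impI subsetI)
        fix m n x assume "m \<le> n" "x \<in> Gs n"
        moreover have "1 / real (Suc n) \<le> 1 / real (Suc m)"
          using \<open>m \<le> n\<close> by (intro divide_left_mono) auto
        ultimately show "x \<in> Gs m" unfolding Gs_def by auto
      qed
      have inter: "(\<Inter>n. Gs n) = a"
      proof
        show "(\<Inter>n. Gs n) \<subseteq> a"
        proof
          fix x assume x: "x \<in> (\<Inter>n. Gs n)"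
          have "infdist x a \<le> 0"
          proof (rule field_le_epsilon)
            fix d :: real assume "d > 0"
            then obtain n where "1 / real (Suc n) < d"
              by (metis nat_approx_posE)
            moreover have "infdist x a < 1 / real (Suc n)" using x unfolding Gs_def by blast
            ultimately show "infdist x a \<le> 0 + d" by linarith
          qed
          then have "infdist x a = 0" using infdist_nonneg[of x a] by linarith
          then show "x \<in> a" using in_closed_iff_infdist_zero[OF ca False] by simp
        qed
      qed (use aG in auto)
      have "range Gs \<subseteq> sets M" using oG by (auto simp: sb borel_open)
      then have lim: "(\<lambda>n. measure M (Gs n)) \<longlonglongrightarrow> measure M a"
        using finite_Lim_measure_decseq[of Gs] dec inter by simp
      show ?thesis
      proof (intro allI impI)
        fix e :: real assume "e > 0"
        from LIMSEQ_D[OF lim this] obtain n where "norm (measure M (Gs n) - measure M a) < e"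
          by auto
        moreover have "measure M (Gs n - a) = measure M (Gs n) - measure M a"
          using aG ca oG by (intro finite_measure_Diff) (auto simp: sb borel_open borel_closed)
        ultimately show "\<exists>F G. closed F \<and> open G \<and> F \<subseteq> a \<and> a \<subseteq> G \<and> measure M (G - F) < e"
          using ca oG aG by (intro exI[of _ a] exI[of _ "Gs n"]) auto
      qed
    qed
  next
    case Empty
    show ?case
    proof (intro allI impI)
      fix e :: real assume e: "0 < e"
      show "\<exists>F G. closed F \<and> open G \<and> F \<subseteq> {} \<and> {} \<subseteq> G \<and> measure M (G - F) < e"
      proof (rule exI[of _ "{}"], rule exI[of _ "{}"])
        show "closed ({}::'a set) \<and> open ({}::'a set) \<and> {} \<subseteq> ({}::'a set) \<and> ({}::'a set) \<subseteq> {} \<and> measure M ({} - {}) < e"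
          using e by simp
      qed
    qed
  next
    case (Compl a)
    show ?case
    proof (intro allI impI)
      fix e :: real assume "e > 0"
      have "\<exists>F G. closed F \<and> open G \<and> F \<subseteq> a \<and> a \<subseteq> G \<and> measure M (G - F) < e"
        using mp[OF spec[OF Compl.IH, of e] \<open>0 < e\<close>] .
      then obtain F G where "closed F" "open G" "F \<subseteq> a" "a \<subseteq> G" "measure M (G - F) < e"
        by metis
      note FG = this
      have e1: "(UNIV - F) - (UNIV - G) = G - F" by blast
      have c1: "closed (UNIV - G)" using FG(2) by (simp add: closed_Diff)
      have o1: "open (UNIV - F)" using FG(1) by (simp add: open_Diff)
      have s1: "UNIV - G \<subseteq> UNIV - a" "UNIV - a \<subseteq> UNIV - F" using FG(3,4) by blast+
      have m1: "measure M ((UNIV - F) - (UNIV - G)) < e" unfolding e1 by (rule FG(5))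
      show "\<exists>F' G'. closed F' \<and> open G' \<and> F' \<subseteq> UNIV - a \<and> UNIV - a \<subseteq> G' \<and> measure M (G' - F') < e"
        using c1 o1 s1 m1 by (intro exI[of _ "UNIV - G"] exI[of _ "UNIV - F"] conjI)
    qed
  next
    case (Union a)
    show ?case
    proof (intro allI impI)
      fix e :: real assume e: "e > 0"
      define c where "c i = e / 4 * (1/2)^i" for i :: nat
      have cpos: "c i > 0" for i using e by (simp add: c_def)
      have "\<forall>i. \<exists>F G. closed F \<and> open G \<and> F \<subseteq> a i \<and> a i \<subseteq> G \<and> measure M (G - F) < c i"
        using Union.IH cpos by metis
      then obtain F G where FG: "\<And>i. closed (F i)" "\<And>i. open (G i)" "\<And>i. F i \<subseteq> a i"
        "\<And>i. a i \<subseteq> G i" "\<And>i. measure M (G i - F i) < c i"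
        by metis
      have sc: "summable c" unfolding c_def
        by (intro summable_mult summable_geometric) auto
      have sumc: "(\<Sum>i. c i) = e / 2" unfolding c_def
        by (subst suminf_mult) (auto simp: suminf_geometric)
      have summ: "summable (\<lambda>i. measure M (G i - F i))"
        by (rule summable_comparison_test[OF _ sc]) (use FG(5) in \<open>auto intro: less_imp_le\<close>)
      have m1: "measure M (\<Union>i. G i - F i) \<le> e / 2"
      proof -
        have "measure M (\<Union>i. G i - F i) \<le> (\<Sum>i. measure M (G i - F i))"
          using FG summ by (intro finite_measure_subadditive_countably) (auto simp: sb borel_open borel_closed)
        also have "\<dots> \<le> (\<Sum>i. c i)"
          using FG(5) summ sc by (intro suminf_le) (auto intro: less_imp_le)
        finally show ?thesis using sumc by simp
      qed
      define P where "P n = (\<Union>i<n. F i)" for n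
      have incP: "incseq P" unfolding incseq_def
      proof (intro allI impI)
        fix m n :: nat assume "m \<le> n"
        show "P m \<subseteq> P n" unfolding P_def by (rule UN_mono) (use \<open>m \<le> n\<close> in auto)
      qed
      have UP: "(\<Union>n. P n) = (\<Union>i. F i)" unfolding P_def by auto
      have cP: "closed (P n)" for n unfolding P_def using FG(1) by auto
      have "range P \<subseteq> sets M" using cP by (auto simp: sb borel_closed)
      then have limP: "(\<lambda>n. measure M (P n)) \<longlonglongrightarrow> measure M (\<Union>i. F i)"
        using finite_Lim_measure_incseq[of P] incP UP by simp
      have "e / 2 > 0" using e by simp
      from LIMSEQ_D[OF limP this] obtain N where
        N: "norm (measure M (P N) - measure M (\<Union>i. F i)) < e / 2" by auto
      have PF: "P N \<subseteq> (\<Union>i. F i)" unfolding P_def by auto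
      have FB: "(\<Union>i. F i) \<in> sets M" using FG(1) by (auto simp: sb borel_closed)
      have "measure M ((\<Union>i. F i) - P N) = measure M (\<Union>i. F i) - measure M (P N)"
        using PF FB cP by (subst finite_measure_Diff) (auto simp: sb borel_closed)
      then have m2: "measure M ((\<Union>i. F i) - P N) < e / 2"
        using N unfolding real_norm_def abs_less_iff by linarith
      have sub: "(\<Union>i. G i) - P N \<subseteq> (\<Union>i. G i - F i) \<union> ((\<Union>i. F i) - P N)" by auto
      have "measure M ((\<Union>i. G i) - P N) \<le> measure M ((\<Union>i. G i - F i) \<union> ((\<Union>i. F i) - P N))"
        using FG cP by (intro finite_measure_mono[OF sub]) (auto simp: sb borel_closed borel_open)
      also have "\<dots> \<le> measure M (\<Union>i. G i - F i) + measure M ((\<Union>i. F i) - P N)"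
        using FG cP by (intro measure_subadditive) (auto simp: sb borel_closed borel_open)
      finally have "measure M ((\<Union>i. G i) - P N) < e" using m1 m2 by simp
      moreover have "P N \<subseteq> (\<Union>i. a i)" "(\<Union>i. a i) \<subseteq> (\<Union>i. G i)" using FG(3,4) unfolding P_def by (fastforce, fastforce)
      ultimately show "\<exists>F' G'. closed F' \<and> open G' \<and> F' \<subseteq> (\<Union>i. a i) \<and> (\<Union>i. a i) \<subseteq> G' \<and> measure M (G' - F') < e"
        using cP FG(2) by (intro exI[of _ "P N"] exI[of _ "\<Union>i. G i"]) auto
    qed
  qed
qed



locale cflow =
  fixes f :: "real \<Rightarrow> 'a::metric_space \<Rightarrow> 'a"
  assumes cpt: "compact (UNIV :: 'a set)" and cf: "continuous_flow f"
begin

lemma f0[simp]: "f 0 x = x" using cf unfolding continuous_flow_def by blast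
lemma fadd: "f (s + t) x = f s (f t x)" using cf unfolding continuous_flow_def by blast
lemma fcont: "continuous_on UNIV (\<lambda>(t, x). f t x)" using cf unfolding continuous_flow_def by blast

lemma finv[simp]: "f t (f (-t) x) = x"
  by (metis fadd f0 add.right_inverse)

lemma f_cont[continuous_intros]:
  assumes "continuous_on S g" "continuous_on S h"
  shows "continuous_on S (\<lambda>p. f (g p) (h p))"
proof -
  have "continuous_on S ((\<lambda>(t, x). f t x) \<circ> (\<lambda>p. (g p, h p)))"
    by (intro continuous_on_compose continuous_on_Pair assms continuous_on_subset[OF fcont]) auto
  then show ?thesis by (simp add: o_def)
qed

lemma f_tendsto:
  assumes "(g \<longlongrightarrow> a) F" "(h \<longlongrightarrow> b) F"
  shows "((\<lambda>n. f (g n) (h n)) \<longlongrightarrow> f a b) F"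
proof -
  have "isCont (\<lambda>(t, x). f t x) (a, b)"
    using fcont by (simp add: continuous_on_eq_continuous_at)
  from isCont_tendsto_compose[OF this tendsto_Pair[OF assms]] show ?thesis by simp
qed

lemma compact_closed: "closed S \<Longrightarrow> compact (S :: 'a set)"
  using compact_Int_closed[OF cpt] by (metis inf_top_left)

definition D :: "real \<Rightarrow> 'a \<Rightarrow> 'a set" where
  "D \<rho> y = {z. \<forall>u. dist (f u y) (f u z) \<le> 2 * \<rho>}"

definition Sg :: "real \<Rightarrow> 'a \<Rightarrow> 'a set" where
  "Sg s y = (\<lambda>r. f r y) ` {-s..s}"

definition Bad :: "real \<Rightarrow> real \<Rightarrow> 'a set" where
  "Bad s \<rho> = {y. \<not> D \<rho> y \<subseteq> Sg s y}"

lemma Sg_compact: "compact (Sg s y)"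
  unfolding Sg_def by (intro compact_continuous_image continuous_intros) auto

lemma D_mono: "\<rho> \<le> \<rho>' \<Longrightarrow> D \<rho> y \<subseteq> D \<rho>' y"
  unfolding D_def by (auto intro: order_trans)

lemma Bad_mono: "\<rho> \<le> \<rho>' \<Longrightarrow> Bad s \<rho> \<subseteq> Bad s \<rho>'"
  unfolding Bad_def using D_mono by blast

lemma Bad_borel:
  assumes "s > 0"
  shows "Bad s \<rho> \<in> sets borel"
proof -
  define Q where "Q m = {p :: 'a \<times> 'a. (\<forall>u. dist (f u (fst p)) (f u (snd p)) \<le> 2 * \<rho>) \<and>
     (\<forall>r. r \<in> {-s..s} \<longrightarrow> 1 / real (Suc m) \<le> dist (snd p) (f r (fst p)))}" for m
  have cQ: "closed (Q m)" for m
  proof -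
    have c1: "closed {p :: 'a \<times> 'a. \<forall>u. dist (f u (fst p)) (f u (snd p)) \<le> 2 * \<rho>}"
      by (intro closed_Collect_all closed_Collect_le continuous_intros)
    have c2: "closed {p :: 'a \<times> 'a. \<forall>r. r \<in> {-s..s} \<longrightarrow> 1 / real (Suc m) \<le> dist (snd p) (f r (fst p))}"
    proof (intro closed_Collect_all)
      fix r
      show "closed {p :: 'a \<times> 'a. r \<in> {-s..s} \<longrightarrow> 1 / real (Suc m) \<le> dist (snd p) (f r (fst p))}"
      proof (cases "r \<in> {-s..s}")
        case True
        then show ?thesis by (simp, intro closed_Collect_le continuous_intros)
      next
        case False
        then have "{p :: 'a \<times> 'a. r \<in> {-s..s} \<longrightarrow> 1 / real (Suc m) \<le> dist (snd p) (f r (fst p))} = UNIV"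
          by blast
        then show ?thesis by simp
      qed
    qed
    have "Q m = {p :: 'a \<times> 'a. \<forall>u. dist (f u (fst p)) (f u (snd p)) \<le> 2 * \<rho>} \<inter>
      {p :: 'a \<times> 'a. \<forall>r. r \<in> {-s..s} \<longrightarrow> 1 / real (Suc m) \<le> dist (snd p) (f r (fst p))}"
      unfolding Q_def by blast
    then show ?thesis using c1 c2 by (simp add: closed_Int)
  qed
  have cfQ: "closed (fst ` Q m)" for m
  proof -
    have "compact (UNIV \<times> UNIV :: ('a \<times> 'a) set)" by (intro compact_Times cpt)
    then have "compact (Q m)" using compact_Int_closed[OF _ cQ] by (metis UNIV_Times_UNIV inf_top_left)
    then show ?thesis by (intro compact_imp_closed compact_continuous_image continuous_intros)
  qed
  have eq: "Bad s \<rho> = (\<Union>m. fst ` Q m)"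
  proof
    show "Bad s \<rho> \<subseteq> (\<Union>m. fst ` Q m)"
    proof
      fix y assume "y \<in> Bad s \<rho>"
      then obtain z where zD: "z \<in> D \<rho> y" and zS: "z \<notin> Sg s y" unfolding Bad_def by blast
      have ne: "Sg s y \<noteq> {}" using assms unfolding Sg_def by auto
      have "infdist z (Sg s y) > 0"
        using infdist_pos_not_in_closed[OF compact_imp_closed[OF Sg_compact] ne zS] .
      then obtain m where m: "1 / real (Suc m) < infdist z (Sg s y)"
        by (metis nat_approx_posE)
      have "\<forall>r. r \<in> {-s..s} \<longrightarrow> 1 / real (Suc m) \<le> dist z (f r y)"
      proof (intro allI impI)
        fix r assume "r \<in> {-s..s}"
        then have "f r y \<in> Sg s y" unfolding Sg_def by blast
        then have "infdist z (Sg s y) \<le> dist z (f r y)" by (rule infdist_le)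
        then show "1 / real (Suc m) \<le> dist z (f r y)" using m by linarith
      qed
      then have "(y, z) \<in> Q m" using zD unfolding Q_def D_def by simp
      then show "y \<in> (\<Union>m. fst ` Q m)" by force
    qed
    show "(\<Union>m. fst ` Q m) \<subseteq> Bad s \<rho>"
    proof
      fix y assume "y \<in> (\<Union>m. fst ` Q m)"
      then obtain m z where yz: "(y, z) \<in> Q m" by force
      then have zD: "z \<in> D \<rho> y" unfolding Q_def D_def by simp
      have "z \<notin> Sg s y"
      proof
        assume "z \<in> Sg s y"
        then obtain r where r: "r \<in> {-s..s}" "z = f r y" unfolding Sg_def by blast
        from yz have "\<forall>r. r \<in> {-s..s} \<longrightarrow> 1 / real (Suc m) \<le> dist z (f r y)" unfolding Q_def by simp
        then have "1 / real (Suc m) \<le> dist z (f r y)" using r(1) by blast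
        then show False using r(2) by simp
      qed
      with zD show "y \<in> Bad s \<rho>" unfolding Bad_def by blast
    qed
  qed
  show ?thesis unfolding eq using cfQ by (intro sets.countable_UN) (auto simp: borel_closed)
qed

lemma Bad_NE:
  assumes "s > 0" "\<epsilon> > 0" and y: "\<forall>n. y \<in> Bad s (1 / real (Suc n))"
  shows "y \<in> NE f \<epsilon>"
proof (rule ccontr)
  assume "y \<notin> NE f \<epsilon>"
  then obtain S0 where S0: "S0 > 0" "Gamma f \<epsilon> y \<subseteq> flow_seg f (-S0) S0 {y}"
    unfolding NE_def by auto
  obtain N where N: "1 / real (Suc N) < \<epsilon> / 2"
    using nat_approx_posE[of "\<epsilon>/2"] assms by auto
  have "\<forall>n. \<exists>r. r \<in> {-S0..S0} \<and> dist y (f r y) \<le> 2 / real (Suc n) \<and> f r y \<notin> Sg s y"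
  proof
    fix n
    from y obtain z where z: "z \<in> D (1 / real (Suc (n + N))) y" "z \<notin> Sg s y"
      unfolding Bad_def by blast
    have le1: "1 / real (Suc (n + N)) \<le> 1 / real (Suc N)"
      by (intro divide_left_mono) auto
    have le2: "1 / real (Suc (n + N)) \<le> 1 / real (Suc n)"
      by (intro divide_left_mono) auto
    have "z \<in> Gamma f \<epsilon> y"
      unfolding Gamma_def
    proof
      show "\<forall>t. dist (f t y) (f t z) < \<epsilon>"
      proof
        fix t
        have "dist (f t y) (f t z) \<le> 2 * (1 / real (Suc (n + N)))"
          using z(1) unfolding D_def by blast
        then show "dist (f t y) (f t z) < \<epsilon>" using le1 N by linarith
      qed
    qed
    then obtain r where r: "r \<in> {-S0..S0}" "z = f r y"
      using S0(2) unfolding flow_seg_def by blast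
    have "dist (f 0 y) (f 0 z) \<le> 2 * (1 / real (Suc (n + N)))"
      using z(1) unfolding D_def by blast
    then have "dist y z \<le> 2 / real (Suc n)" using le2 by simp
    then show "\<exists>r. r \<in> {-S0..S0} \<and> dist y (f r y) \<le> 2 / real (Suc n) \<and> f r y \<notin> Sg s y"
      using r z(2) by blast
  qed
  then obtain R where R: "\<And>n. R n \<in> {-S0..S0}" "\<And>n. dist y (f (R n) y) \<le> 2 / real (Suc n)"
    "\<And>n. f (R n) y \<notin> Sg s y"
    by metis
  have "seq_compact {-S0..S0}" by (intro compact_imp_seq_compact compact_Icc)
  then obtain l \<phi> where l: "l \<in> {-S0..S0}" "strict_mono \<phi>" "(R \<circ> \<phi>) \<longlonglongrightarrow> l"
    using seq_compactE R(1) by metis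
  have lim1: "(\<lambda>n. f (R (\<phi> n)) y) \<longlonglongrightarrow> f l y"
    using f_tendsto[OF l(3) tendsto_const] by (simp add: o_def)
  have lim2: "(\<lambda>n. 2 * inverse (real (Suc n)) + dist (f (R (\<phi> n)) y) (f l y)) \<longlonglongrightarrow> 0"
  proof -
    have "(\<lambda>n. 2 * inverse (real (Suc n))) \<longlonglongrightarrow> 2 * 0"
      by (intro tendsto_mult tendsto_const LIMSEQ_inverse_real_of_nat)
    moreover have "(\<lambda>n. dist (f (R (\<phi> n)) y) (f l y)) \<longlonglongrightarrow> dist (f l y) (f l y)"
      by (intro tendsto_dist lim1 tendsto_const)
    ultimately show ?thesis using tendsto_add by fastforce
  qed
  have "dist y (f l y) \<le> 0"
  proof (rule LIMSEQ_le_const[OF lim2], intro exI allI impI)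
    fix n :: nat
    have "\<phi> n \<ge> n" using l(2) by (rule seq_suble)
    then have a: "2 / real (Suc (\<phi> n)) \<le> 2 / real (Suc n)"
      by (intro divide_left_mono) auto
    have "dist y (f (R (\<phi> n)) y) \<le> 2 / real (Suc n)"
      using R(2)[of "\<phi> n"] a by linarith
    then have "dist y (f (R (\<phi> n)) y) \<le> 2 * inverse (real (Suc n))"
      by (simp add: divide_inverse)
    moreover have "dist y (f l y) \<le> dist y (f (R (\<phi> n)) y) + dist (f (R (\<phi> n)) y) (f l y)"
      by (rule dist_triangle)
    ultimately show "dist y (f l y) \<le> 2 * inverse (real (Suc n)) + dist (f (R (\<phi> n)) y) (f l y)"
      by linarith
  qed
  then have fl: "f l y = y" by simp
  from l(3) \<open>s > 0\<close> obtain n where n: "dist ((R \<circ> \<phi>) n) l < s"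
    by (metis LIMSEQ_D dist_real_def order_refl real_norm_def)
  then have "R (\<phi> n) - l \<in> {-s..s}" by (auto simp: dist_real_def)
  moreover have "f (R (\<phi> n)) y = f (R (\<phi> n) - l) y"
    using fadd[of "R (\<phi> n) - l" l y] fl by simp
  ultimately have "f (R (\<phi> n)) y \<in> Sg s y" unfolding Sg_def by blast
  with R(3) show False by blast
qed

lemma main_step:
  fixes \<nu> :: "'a measure" and \<A> :: "real \<Rightarrow> 'a set set"
  assumes fm: "finite_measure \<nu>" and sb: "sets \<nu> = sets borel" and s: "s > 0"
    and bad: "measure \<nu> (Bad s \<rho>) < \<alpha> / 2"
    and cover: "\<And>t. t > 0 \<Longrightarrow> \<Union>(\<A> t) = UNIV"
    and small: "\<And>t A'. t > 0 \<Longrightarrow> A' \<in> \<A> t \<Longrightarrow> \<exists>x. A' \<subseteq> closed_bowen_ball f t x \<rho>"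
    and A: "A \<in> sets \<nu>" and \<kappa>: "\<kappa> > 0"
  shows "\<exists>t0>0. \<forall>t\<ge>t0. \<exists>\<U>. \<U> \<subseteq> \<A> t \<and>
     outer_less \<nu> (f (t/2) ` (\<Union>\<U>) - flow_seg f (- (3 * s)) (3 * s) A) (ennreal \<kappa>) \<and>
     outer_less \<nu> (A - f (t/2) ` (\<Union>\<U>)) (ennreal \<alpha>)"
proof -
  interpret finite_measure \<nu> by fact
  have Bb: "Bad s \<rho> \<in> sets \<nu>" using Bad_borel[OF s] sb by simp
  define B where "B = A - Bad s \<rho>"
  have Bs: "B \<in> sets borel" using A Bb sb unfolding B_def by auto
  have a2: "\<alpha> / 2 > 0" using bad measure_nonneg[of \<nu> "Bad s \<rho>"] by linarith
  obtain K G where KG: "closed K" "open G" "K \<subseteq> B" "B \<subseteq> G" "measure \<nu> (G - K) < \<alpha> / 2"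
    using closed_regular[OF fm sb Bs] a2 by metis
  have KA: "K \<subseteq> A" and Kgood: "\<And>y. y \<in> K \<Longrightarrow> y \<notin> Bad s \<rho>"
    using KG(3) unfolding B_def by auto
  have Ks: "K \<in> sets \<nu>" using KG(1) sb by (simp add: borel_closed)
  have Gs: "G \<in> sets \<nu>" using KG(2) sb by (simp add: borel_open)
  have mAK: "measure \<nu> (A - K) < \<alpha>"
  proof -
    have "A - K \<subseteq> Bad s \<rho> \<union> (G - K)" using KG(4) unfolding B_def by blast
    then have "measure \<nu> (A - K) \<le> measure \<nu> (Bad s \<rho> \<union> (G - K))"
      using Bb Gs Ks by (intro finite_measure_mono) auto
    also have "\<dots> \<le> measure \<nu> (Bad s \<rho>) + measure \<nu> (G - K)"
      using Bb Gs Ks by (intro measure_subadditive) auto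
    finally show ?thesis using bad KG(5) by linarith
  qed
  have cpK: "compact K" using compact_closed[OF KG(1)] .
  define C where "C = (\<lambda>p. f (fst p) (snd p)) ` ({-s..s} \<times> K)"
  have cpC: "compact C" unfolding C_def
    by (intro compact_continuous_image continuous_intros compact_Times compact_Icc cpK)
  have Cs: "C \<in> sets \<nu>" using cpC sb by (simp add: borel_closed compact_imp_closed)
  have C_sub: "C \<subseteq> flow_seg f (- (3 * s)) (3 * s) A"
  proof
    fix z assume "z \<in> C"
    then obtain r y where ry: "r \<in> {-s..s}" "y \<in> K" "z = f r y" unfolding C_def by auto
    then have "r \<in> {- (3 * s)..3 * s}" using s by auto
    with ry KA show "z \<in> flow_seg f (- (3 * s)) (3 * s) A" unfolding flow_seg_def by blast
  qed
  define M where "M T = {z. \<exists>y\<in>K. \<forall>u\<in>{-T..T}. dist (f u y) (f u z) \<le> 2 * \<rho>}" for T :: real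
  have cM: "closed (M T)" for T
  proof -
    define P where "P = {p :: 'a \<times> 'a. \<forall>u. u \<in> {-T..T} \<longrightarrow> dist (f u (fst p)) (f u (snd p)) \<le> 2 * \<rho>}"
    have cP: "closed P" unfolding P_def
    proof (intro closed_Collect_all)
      fix u
      show "closed {p :: 'a \<times> 'a. u \<in> {-T..T} \<longrightarrow> dist (f u (fst p)) (f u (snd p)) \<le> 2 * \<rho>}"
      proof (cases "u \<in> {-T..T}")
        case True
        then show ?thesis by (simp, intro closed_Collect_le continuous_intros)
      next
        case False
        then have "{p :: 'a \<times> 'a. u \<in> {-T..T} \<longrightarrow> dist (f u (fst p)) (f u (snd p)) \<le> 2 * \<rho>} = UNIV"
          by blast
        then show ?thesis by simp
      qed
    qed
    have "compact ((K \<times> UNIV) \<inter> P)"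
      by (intro compact_Int_closed compact_Times cpK cpt cP)
    then have "compact (snd ` ((K \<times> UNIV) \<inter> P))"
      by (intro compact_continuous_image continuous_intros)
    moreover have "snd ` ((K \<times> UNIV) \<inter> P) = M T"
    proof
      show "snd ` ((K \<times> UNIV) \<inter> P) \<subseteq> M T" unfolding M_def P_def by force
      show "M T \<subseteq> snd ` ((K \<times> UNIV) \<inter> P)"
      proof
        fix z assume "z \<in> M T"
        then obtain y where "y \<in> K" "\<forall>u\<in>{-T..T}. dist (f u y) (f u z) \<le> 2 * \<rho>"
          unfolding M_def by blast
        then have "(y, z) \<in> (K \<times> UNIV) \<inter> P" unfolding P_def by simp
        then show "z \<in> snd ` ((K \<times> UNIV) \<inter> P)" by force
      qed
    qed
    ultimately show ?thesis by (metis compact_imp_closed)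
  qed
  have Mmono: "M T' \<subseteq> M T" if "T \<le> T'" for T T'
    using that unfolding M_def by fastforce
  have interM: "(\<Inter>n. M (real n)) \<subseteq> C"
  proof
    fix z assume z: "z \<in> (\<Inter>n. M (real n))"
    have "\<forall>n. \<exists>y. y \<in> K \<and> (\<forall>u\<in>{- real n..real n}. dist (f u y) (f u z) \<le> 2 * \<rho>)"
      using z unfolding M_def by blast
    then obtain Y where Y: "\<And>n. Y n \<in> K" "\<And>n u. u \<in> {- real n..real n} \<Longrightarrow> dist (f u (Y n)) (f u z) \<le> 2 * \<rho>"
      by metis
    obtain l \<phi> where l: "l \<in> K" "strict_mono \<phi>" "(Y \<circ> \<phi>) \<longlonglongrightarrow> l"
      using seq_compactE[OF compact_imp_seq_compact[OF cpK]] Y(1) by metis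
    have "z \<in> D \<rho> l" unfolding D_def
    proof (intro CollectI allI)
      fix u
      have lim: "(\<lambda>n. dist (f u ((Y \<circ> \<phi>) n)) (f u z)) \<longlonglongrightarrow> dist (f u l) (f u z)"
        by (intro tendsto_dist f_tendsto tendsto_const l(3))
      show "dist (f u l) (f u z) \<le> 2 * \<rho>"
      proof (rule LIMSEQ_le_const2[OF lim], intro exI allI impI)
        fix n assume n: "n \<ge> nat \<lceil>\<bar>u\<bar>\<rceil>"
        have "\<phi> n \<ge> n" using l(2) by (rule seq_suble)
        then have "real (\<phi> n) \<ge> \<bar>u\<bar>" using n by linarith
        then have "u \<in> {- real (\<phi> n)..real (\<phi> n)}" by auto
        then show "dist (f u ((Y \<circ> \<phi>) n)) (f u z) \<le> 2 * \<rho>" using Y(2) by simp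
      qed
    qed
    moreover have "D \<rho> l \<subseteq> Sg s l" using Kgood[OF l(1)] unfolding Bad_def by blast
    ultimately obtain r where "r \<in> {-s..s}" "z = f r l" unfolding Sg_def by blast
    then show "z \<in> C" unfolding C_def using l(1) by (intro image_eqI[of _ _ "(r, l)"]) auto
  qed
  have MCs: "M (real n) - C \<in> sets \<nu>" for n using cM Cs sb by (auto simp: borel_closed)
  have "(\<lambda>n. measure \<nu> (M (real n) - C)) \<longlonglongrightarrow> measure \<nu> (\<Inter>n. M (real n) - C)"
  proof (rule finite_Lim_measure_decseq)
    show "range (\<lambda>n. M (real n) - C) \<subseteq> sets \<nu>" using MCs by auto
    show "decseq (\<lambda>n. M (real n) - C)" unfolding decseq_def
    proof (intro allI impI)
      fix m n :: nat assume "m \<le> n"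
      then have "M (real n) \<subseteq> M (real m)" by (intro Mmono) simp
      then show "M (real n) - C \<subseteq> M (real m) - C" by blast
    qed
  qed
  moreover have "(\<Inter>n. M (real n) - C) = {}" using interM by blast
  ultimately have lim: "(\<lambda>n. measure \<nu> (M (real n) - C)) \<longlonglongrightarrow> 0"
    by (metis measure_empty)
  from LIMSEQ_D[OF lim \<kappa>] obtain N where N: "measure \<nu> (M (real N) - C) < \<kappa>"
    by (metis order_refl real_norm_def abs_less_iff diff_zero)
  show ?thesis
  proof (intro exI[of _ "2 * real N + 2"] conjI allI impI)
    show "0 < 2 * real N + 2" by simp
    fix t :: real assume t: "2 * real N + 2 \<le> t"
    have N0: "real N \<ge> 0" by simp
    with t have tpos: "t > 0" by linarith
    define U where "U = {A' \<in> \<A> t. f (t/2) ` A' \<inter> K \<noteq> {}}"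
    have c1: "f (t/2) ` (\<Union>U) \<subseteq> M (real N)"
    proof
      fix z assume "z \<in> f (t/2) ` (\<Union>U)"
      then obtain a A' where aA: "A' \<in> \<A> t" "a \<in> A'" "z = f (t/2) a" "f (t/2) ` A' \<inter> K \<noteq> {}"
        unfolding U_def by blast
      then obtain b where b: "b \<in> A'" "f (t/2) b \<in> K" by blast
      obtain x where x: "A' \<subseteq> closed_bowen_ball f t x \<rho>" using small[OF tpos aA(1)] by blast
      have "\<forall>u\<in>{- real N..real N}. dist (f u (f (t/2) b)) (f u z) \<le> 2 * \<rho>"
      proof
        fix u assume u: "u \<in> {- real N..real N}"
        define r where "r = u + t/2"
        have r: "r \<in> {0..t}" using u t N0 unfolding r_def by auto
        have e1: "f u (f (t/2) b) = f r b" unfolding r_def by (simp add: fadd)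
        have e2: "f u z = f r a" unfolding r_def aA(3) by (simp add: fadd)
        have d1: "dist (f r x) (f r b) \<le> \<rho>" using x b(1) r unfolding closed_bowen_ball_def by blast
        have d2: "dist (f r x) (f r a) \<le> \<rho>" using x aA(2) r unfolding closed_bowen_ball_def by blast
        have "dist (f r b) (f r a) \<le> dist (f r b) (f r x) + dist (f r a) (f r x)"
          by (rule dist_triangle2)
        then show "dist (f u (f (t/2) b)) (f u z) \<le> 2 * \<rho>"
          unfolding e1 e2 using d1 d2 by (simp add: dist_commute)
      qed
      then show "z \<in> M (real N)" unfolding M_def using b(2) by blast
    qed
    have c2: "K \<subseteq> f (t/2) ` (\<Union>U)"
    proof
      fix y assume y: "y \<in> K"
      have "f (- (t/2)) y \<in> \<Union>(\<A> t)" using cover[OF tpos] by simp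
      then obtain A' where A': "A' \<in> \<A> t" "f (- (t/2)) y \<in> A'" by blast
      have "y = f (t/2) (f (- (t/2)) y)" by simp
      then have "y \<in> f (t/2) ` A'" using A'(2) by blast
      then have "A' \<in> U" unfolding U_def using A'(1) y by blast
      then show "y \<in> f (t/2) ` (\<Union>U)" using \<open>y \<in> f (t/2) ` A'\<close> by blast
    qed
    show "\<exists>\<U>. \<U> \<subseteq> \<A> t \<and>
       outer_less \<nu> (f (t/2) ` (\<Union>\<U>) - flow_seg f (- (3 * s)) (3 * s) A) (ennreal \<kappa>) \<and>
       outer_less \<nu> (A - f (t/2) ` (\<Union>\<U>)) (ennreal \<alpha>)"
    proof (intro exI[of _ U] conjI)
      show "U \<subseteq> \<A> t" unfolding U_def by blast
      show "outer_less \<nu> (f (t/2) ` (\<Union>U) - flow_seg f (- (3 * s)) (3 * s) A) (ennreal \<kappa>)"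
        unfolding outer_less_def
      proof (intro bexI[of _ "M (real N) - C"] conjI)
        show "f (t/2) ` (\<Union>U) - flow_seg f (- (3 * s)) (3 * s) A \<subseteq> M (real N) - C"
          using c1 C_sub by blast
        show "emeasure \<nu> (M (real N) - C) < ennreal \<kappa>"
          using N by (simp add: emeasure_eq_measure ennreal_less_iff)
        show "M (real N) - C \<in> sets \<nu>" by (rule MCs)
      qed
      show "outer_less \<nu> (A - f (t/2) ` (\<Union>U)) (ennreal \<alpha>)"
        unfolding outer_less_def
      proof (intro bexI[of _ "A - K"] conjI)
        show "A - f (t/2) ` (\<Union>U) \<subseteq> A - K" using c2 by blast
        show "emeasure \<nu> (A - K) < ennreal \<alpha>"
          using mAK by (simp add: emeasure_eq_measure ennreal_less_iff)
        show "A - K \<in> sets \<nu>" using A Ks by auto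
      qed
    qed
  qed
qed

end
theorem proposition4p1:
  fixes f :: "real \<Rightarrow> 'a::metric_space \<Rightarrow> 'a" and \<nu> :: "'a measure"
    and \<epsilon> s \<alpha> :: real
  assumes "compact (UNIV :: 'a set)"
    and "continuous_flow f"
    and "invariant_borel_prob f \<nu>"
    and "\<epsilon> > 0"
    and "almost_expansive f \<nu> \<epsilon>"
    and "s > 0" and "\<alpha> > 0"
  shows "\<exists>\<rho>0>0. \<forall>\<rho>. 0 < \<rho> \<and> \<rho> < \<rho>0 \<and> \<rho> < \<epsilon> / 2 \<longrightarrow>
     (\<forall>\<A> :: real \<Rightarrow> 'a set set.
        (\<forall>t>0. \<exists>E. max_separated f t \<rho> E \<and> adapted_partition f t \<rho> E (\<A> t)) \<longrightarrow>
        (\<forall>A \<in> sets \<nu>. emeasure \<nu> A > 0 \<longrightarrow>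
          (\<forall>\<kappa>>0. \<exists>t0>0. \<forall>t\<ge>t0. \<exists>\<U>. \<U> \<subseteq> \<A> t \<and>
              outer_less \<nu> (f (t/2) ` (\<Union>\<U>) - flow_seg f (- (3 * s)) (3 * s) A) (ennreal \<kappa>) \<and>
              outer_less \<nu> (A - f (t/2) ` (\<Union>\<U>)) (ennreal \<alpha>))))"
proof -
  interpret cflow f using assms(1,2) by unfold_locales
  from assms(3) have ps: "prob_space \<nu>" and sb: "sets \<nu> = sets borel"
    unfolding invariant_borel_prob_def by auto
  have fm: "finite_measure \<nu>" using ps unfolding prob_space_def by blast
  interpret finite_measure \<nu> by fact
  have NEn: "NE f \<epsilon> \<in> null_sets \<nu>" using assms(5) unfolding almost_expansive_def .
  have NEs: "NE f \<epsilon> \<in> sets \<nu>" using NEn by (rule null_setsD2)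
  have NE0: "measure \<nu> (NE f \<epsilon>) = 0" unfolding measure_def using null_setsD1[OF NEn] by simp
  define Bn where "Bn n = Bad s (1 / real (Suc n))" for n
  have Bns: "Bn n \<in> sets \<nu>" for n unfolding Bn_def using Bad_borel[OF assms(6)] sb by simp
  have "(\<lambda>n. measure \<nu> (Bn n)) \<longlonglongrightarrow> measure \<nu> (\<Inter>n. Bn n)"
  proof (rule finite_Lim_measure_decseq)
    show "range Bn \<subseteq> sets \<nu>" using Bns by auto
    show "decseq Bn" unfolding decseq_def Bn_def
    proof (intro allI impI)
      fix m n :: nat assume "m \<le> n"
      then have "1 / real (Suc n) \<le> 1 / real (Suc m)" by (intro divide_left_mono) auto
      then show "Bad s (1 / real (Suc n)) \<subseteq> Bad s (1 / real (Suc m))" by (rule Bad_mono)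
    qed
  qed
  moreover have "measure \<nu> (\<Inter>n. Bn n) = 0"
  proof -
    have "(\<Inter>n. Bn n) \<subseteq> NE f \<epsilon>"
    proof
      fix y assume "y \<in> (\<Inter>n. Bn n)"
      then have "\<forall>n. y \<in> Bad s (1 / real (Suc n))" unfolding Bn_def by simp
      then show "y \<in> NE f \<epsilon>" by (rule Bad_NE[OF assms(6) assms(4)])
    qed
    then have "measure \<nu> (\<Inter>n. Bn n) \<le> measure \<nu> (NE f \<epsilon>)"
      using NEs by (rule finite_measure_mono)
    then show ?thesis using NE0 measure_nonneg[of \<nu> "\<Inter>n. Bn n"] by linarith
  qed
  ultimately have lim: "(\<lambda>n. measure \<nu> (Bn n)) \<longlonglongrightarrow> 0" by simp
  have a2: "\<alpha> / 2 > 0" using assms(7) by simp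
  from LIMSEQ_D[OF lim a2] obtain n0 where n0: "measure \<nu> (Bn n0) < \<alpha> / 2"
    by (metis order_refl real_norm_def abs_less_iff diff_zero)
  show ?thesis
  proof (rule exI[of _ "1 / real (Suc n0)"], intro conjI allI impI ballI)
    show "0 < 1 / real (Suc n0)" by simp
    fix \<rho> :: real and \<A> :: "real \<Rightarrow> 'a set set" and A :: "'a set" and \<kappa> :: real
    assume rho: "0 < \<rho> \<and> \<rho> < 1 / real (Suc n0) \<and> \<rho> < \<epsilon> / 2"
      and part: "\<forall>t>0. \<exists>E. max_separated f t \<rho> E \<and> adapted_partition f t \<rho> E (\<A> t)"
      and A: "A \<in> sets \<nu>" and Apos: "0 < emeasure \<nu> A" and \<kappa>: "0 < \<kappa>"
    have bad: "measure \<nu> (Bad s \<rho>) < \<alpha> / 2"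
    proof -
      have "Bad s \<rho> \<subseteq> Bn n0" unfolding Bn_def using rho by (intro Bad_mono) simp
      then have "measure \<nu> (Bad s \<rho>) \<le> measure \<nu> (Bn n0)" using Bns by (intro finite_measure_mono)
      then show ?thesis using n0 by linarith
    qed
    have cover: "\<Union>(\<A> t) = UNIV" if tp: "t > 0" for t
    proof -
      obtain E where "adapted_partition f t \<rho> E (\<A> t)" using part tp by metis
      then have "borel_partition (\<A> t)" unfolding adapted_partition_def by (rule conjunct1)
      then show ?thesis unfolding borel_partition_def by (rule conjunct1)
    qed
    have small: "\<exists>x. A' \<subseteq> closed_bowen_ball f t x \<rho>" if tp: "t > 0" and tA: "A' \<in> \<A> t" for t A'
    proof -
      obtain E where "adapted_partition f t \<rho> E (\<A> t)" using part tp by metis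
      then have "\<forall>A'\<in>\<A> t. \<exists>x\<in>E. bowen_ball f t x (\<rho>/2) \<subseteq> A' \<and> A' \<subseteq> closed_bowen_ball f t x \<rho>"
        unfolding adapted_partition_def by (rule conjunct2)
      then obtain x where "A' \<subseteq> closed_bowen_ball f t x \<rho>" using tA by metis
      then show ?thesis by (rule exI)
    qed
    show "\<exists>t0>0. \<forall>t\<ge>t0. \<exists>\<U>. \<U> \<subseteq> \<A> t \<and>
              outer_less \<nu> (f (t/2) ` (\<Union>\<U>) - flow_seg f (- (3 * s)) (3 * s) A) (ennreal \<kappa>) \<and>
              outer_less \<nu> (A - f (t/2) ` (\<Union>\<U>)) (ennreal \<alpha>)"
      by (rule main_step[OF fm sb assms(6) bad cover small A \<kappa>])
  qed
qed

end
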